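(* If $A,B\in\mathrm{Sym}_{>}(\mathbb C^{2d})$, then $A\#B$ is well defined and $A\#B\in\mathrm{Sym}_{>}(\mathbb C^{2d})$; thus $(\mathrm{Sym}_{>}(\mathbb C^{2d}),\#)$ is a semigroup. Moreover, if $A,B\in\mathrm{Sym}^{\rm qnd}_{>}(\mathbb C^{2d})$, then $A\#B\in\mathrm{Sym}^{\rm qnd}_{>}(\mathbb C^{2d})$, so $(\mathrm{Sym}^{\rm qnd}_{>}(\mathbb C^{2d}),\#)$ is also a semigroup.
   Context: Let $d\ge 1$, let $\mathbb 1$ denote an identity matrix, and let $\theta=\begin{bmatrix}0&-i\mathbb 1_d\\ i\mathbb 1_d&0\end{bmatrix}$ ($2d\times 2d$). $\mathrm{Sym}(\mathbb C^{n})$ denotes the set of complex symmetric $n\times n$ matrices; $\mathrm{Sym}_{>}(\mathbb C^{n})=\{A\in\mathrm{Sym}(\mathbb C^n):\ \Re A \text{ is positive definite}\}$ where $\Re A=(A+\bar A)/2$; $\mathrm{Sym}^{\rm qnd}_{>}(\mathbb C^{2d})=\{A\in\mathrm{Sym}_{>}(\mathbb C^{2d}):\det(\mathbb 1+A\theta)\ne0\}$. For $A,B\in\mathrm{Sym}(\mathbb C^{2d})$ such that $M=\begin{bmatrix}\theta A\theta&-\theta\\ \theta&\theta B\theta\end{bmatrix}$ is invertible, $A\#B:=J^TM^{-1}J$ with $J=\begin{bmatrix}-\mathbb 1_{2d}\\ \mathbb 1_{2d}\end{bmatrix}$; $A\#B$ is well defined iff $M$ is invertible. *)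

theory Defs
  imports Complex_Main "Jordan_Normal_Form.Matrix" "Jordan_Normal_Form.Determinant"
begin

definition theta_mat :: "nat \<Rightarrow> complex mat" where
  "theta_mat d = four_block_mat (0\<^sub>m d d) ((- \<i>) \<cdot>\<^sub>m 1\<^sub>m d) (\<i> \<cdot>\<^sub>m 1\<^sub>m d) (0\<^sub>m d d)"

definition sym_mat :: "nat \<Rightarrow> complex mat \<Rightarrow> bool" where
  "sym_mat n A \<longleftrightarrow> A \<in> carrier_mat n n \<and> transpose_mat A = A"

definition re_mat :: "complex mat \<Rightarrow> real mat" where
  "re_mat A = map_mat Re A"

definition pos_def_real :: "nat \<Rightarrow> real mat \<Rightarrow> bool" where
  "pos_def_real n R \<longleftrightarrow> R \<in> carrier_mat n n \<and>
     (\<forall>v \<in> carrier_vec n. v \<noteq> 0\<^sub>v n \<longrightarrow> v \<bullet> (R *\<^sub>v v) > 0)"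

definition Sym_pos :: "nat \<Rightarrow> complex mat set" where
  "Sym_pos n = {A. sym_mat n A \<and> pos_def_real n (re_mat A)}"

definition Sym_qnd :: "nat \<Rightarrow> complex mat set" where
  "Sym_qnd d = {A \<in> Sym_pos (2*d). det (1\<^sub>m (2*d) + A * theta_mat d) \<noteq> 0}"

definition M_mat :: "nat \<Rightarrow> complex mat \<Rightarrow> complex mat \<Rightarrow> complex mat" where
  "M_mat d A B = four_block_mat (theta_mat d * A * theta_mat d) (- theta_mat d)
                                (theta_mat d) (theta_mat d * B * theta_mat d)"

definition J_mat :: "nat \<Rightarrow> complex mat" where
  "J_mat d = (- 1\<^sub>m (2*d)) @\<^sub>r (1\<^sub>m (2*d))"

definition sharp_well_defined :: "nat \<Rightarrow> complex mat \<Rightarrow> complex mat \<Rightarrow> bool" where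
  "sharp_well_defined d A B \<longleftrightarrow> invertible_mat (M_mat d A B)"

definition inv_mat :: "complex mat \<Rightarrow> complex mat" where
  "inv_mat N = (SOME N'. inverts_mat N N' \<and> inverts_mat N' N)"

definition sharp :: "nat \<Rightarrow> complex mat \<Rightarrow> complex mat \<Rightarrow> complex mat" where
  "sharp d A B = transpose_mat (J_mat d) * inv_mat (M_mat d A B) * J_mat d"

end

theory Submission
  imports Defs
begin

lemma theta_carrier[simp]: "theta_mat d \<in> carrier_mat (2*d) (2*d)"
  unfolding theta_mat_def mult_2 by (rule four_block_carrier_mat) auto

lemma theta_dims[simp]: "dim_row (theta_mat d) = 2*d" "dim_col (theta_mat d) = 2*d"
  using theta_carrier[of d] unfolding carrier_mat_def by auto

lemma T_v_carrier[simp]: "v \<in> carrier_vec (2*d) \<Longrightarrow> theta_mat d *\<^sub>v v \<in> carrier_vec (2*d)"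
  using theta_carrier by (rule mult_mat_vec_carrier)

lemma mv_uminus: "M \<in> carrier_mat k k' \<Longrightarrow> v \<in> carrier_vec k' \<Longrightarrow> M *\<^sub>v (- v) = - (M *\<^sub>v (v :: complex vec))"
  by (intro eq_vecI) auto

lemma vec_split: assumes "x \<in> carrier_vec (2*d)"
  obtains x1 x2 where "x1 \<in> carrier_vec d" "x2 \<in> carrier_vec d" "x = x1 @\<^sub>v x2"
  using assms unfolding mult_2 by (metis vec_first_carrier vec_last_carrier vec_first_last_append)

lemma theta_split: assumes "x1 \<in> carrier_vec d" "x2 \<in> carrier_vec d"
  shows "theta_mat d *\<^sub>v (x1 @\<^sub>v x2) = ((-\<i>) \<cdot>\<^sub>v x2) @\<^sub>v (\<i> \<cdot>\<^sub>v x1)"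
  unfolding theta_mat_def
  apply (subst four_block_mat_mult_vec[of _ d d _ d _ d])
  using assms apply auto
  done

lemma conj_append: "conjugate (a @\<^sub>v b) = conjugate a @\<^sub>v conjugate (b :: complex vec)"
  by (rule eq_vecI) auto

lemma theta_theta: assumes "x \<in> carrier_vec (2*d)"
  shows "theta_mat d *\<^sub>v (theta_mat d *\<^sub>v x) = x"
proof -
  obtain x1 x2 where x: "x1 \<in> carrier_vec d" "x2 \<in> carrier_vec d" "x = x1 @\<^sub>v x2"
    using vec_split[OF assms] by blast
  show ?thesis using x by (simp add: theta_split smult_smult_assoc)
qed

lemma theta_anti: assumes "x \<in> carrier_vec (2*d)" "y \<in> carrier_vec (2*d)"
  shows "(theta_mat d *\<^sub>v x) \<bullet> y = - (x \<bullet> (theta_mat d *\<^sub>v y))"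
proof -
  obtain x1 x2 where x: "x1 \<in> carrier_vec d" "x2 \<in> carrier_vec d" "x = x1 @\<^sub>v x2"
    using vec_split[OF assms(1)] by blast
  obtain y1 y2 where y: "y1 \<in> carrier_vec d" "y2 \<in> carrier_vec d" "y = y1 @\<^sub>v y2"
    using vec_split[OF assms(2)] by blast
  show ?thesis using x y 
    by (simp add: theta_split scalar_prod_append[of _ d _ d] comm_scalar_prod[of _ d] algebra_simps)
qed

lemma theta_herm: assumes "x \<in> carrier_vec (2*d)" "y \<in> carrier_vec (2*d)"
  shows "(theta_mat d *\<^sub>v x) \<bullet> conjugate y = x \<bullet> conjugate (theta_mat d *\<^sub>v y)"
proof -
  obtain x1 x2 where x: "x1 \<in> carrier_vec d" "x2 \<in> carrier_vec d" "x = x1 @\<^sub>v x2"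
    using vec_split[OF assms(1)] by blast
  obtain y1 y2 where y: "y1 \<in> carrier_vec d" "y2 \<in> carrier_vec d" "y = y1 @\<^sub>v y2"
    using vec_split[OF assms(2)] by blast
  show ?thesis using x y 
    by (simp add: theta_split conj_append conjugate_smult_vec scalar_prod_append[of _ d _ d] comm_scalar_prod[of _ d] algebra_simps)
qed


lemma append_dim0: "w \<in> carrier_vec 0 \<Longrightarrow> v @\<^sub>v w = v"
  by (rule eq_vecI) auto

lemma J_mult: assumes "z \<in> carrier_vec (2*d)"
  shows "J_mat d *\<^sub>v z = (- z) @\<^sub>v z"
  unfolding J_mat_def using assms
  by (subst mat_mult_append[of _ "2*d" "2*d"]) auto

lemma JT_mult: assumes "p \<in> carrier_vec (2*d)" "q \<in> carrier_vec (2*d)"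
  shows "transpose_mat (J_mat d) *\<^sub>v (p @\<^sub>v q) = q - p"
proof -
  have "transpose_mat (J_mat d) = four_block_mat (- 1\<^sub>m (2*d)) (1\<^sub>m (2*d)) (0\<^sub>m 0 (2*d)) (0\<^sub>m 0 (2*d))"
    unfolding J_mat_def append_rows_def
    by (subst transpose_four_block_mat[of _ "2*d" "2*d" _ 0 _ "2*d"]) (auto simp: transpose_uminus)
  then show ?thesis using assms
    apply simp
    apply (subst four_block_mat_mult_vec[of _ "2*d" "2*d" _ "2*d" _ 0])
    by auto
qed


lemma cs_sum: "x \<in> carrier_vec k \<Longrightarrow> y \<in> carrier_vec k \<Longrightarrow>
   x \<bullet>c y = (\<Sum>i<k. x$i * cnj (y$i))"
  unfolding scalar_prod_def by (auto intro!: sum.cong simp: atLeast0LessThan)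

lemma cs_add_right: "x \<in> carrier_vec k \<Longrightarrow> y \<in> carrier_vec k \<Longrightarrow> z \<in> carrier_vec k \<Longrightarrow>
   x \<bullet>c (y + z) = x \<bullet>c y + x \<bullet>c (z :: complex vec)"
  by (simp add: cs_sum sum.distrib algebra_simps)

lemma cs_minus_right: "x \<in> carrier_vec k \<Longrightarrow> y \<in> carrier_vec k \<Longrightarrow> z \<in> carrier_vec k \<Longrightarrow>
   x \<bullet>c (y - z) = x \<bullet>c y - x \<bullet>c (z :: complex vec)"
  by (simp add: cs_sum sum_subtractf algebra_simps)

lemma cs_minus_left: "x \<in> carrier_vec k \<Longrightarrow> y \<in> carrier_vec k \<Longrightarrow> z \<in> carrier_vec k \<Longrightarrow>
   (x - y) \<bullet>c z = x \<bullet>c z - y \<bullet>c (z :: complex vec)"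
  by (subst cs_sum[of _ k], simp, simp) (simp add: cs_sum sum_subtractf algebra_simps)

lemma cs_swap_Re: "x \<in> carrier_vec k \<Longrightarrow> y \<in> carrier_vec k \<Longrightarrow>
   Re (x \<bullet>c y) = Re (y \<bullet>c (x :: complex vec))"
  by (simp add: cs_sum Re_sum algebra_simps)

lemma cs_swap_cnj: "x \<in> carrier_vec k \<Longrightarrow> y \<in> carrier_vec k \<Longrightarrow>
   x \<bullet>c y = cnj (y \<bullet>c (x :: complex vec))"
  by (simp add: cs_sum algebra_simps)

lemma Av_sum: "A \<in> carrier_mat k k \<Longrightarrow> a \<in> carrier_vec k \<Longrightarrow> i < k \<Longrightarrow>
  (A *\<^sub>v a) $ i = (\<Sum>j<k. A $$ (i,j) * a $ j)"
  by (auto simp: scalar_prod_def atLeast0LessThan intro!: sum.cong)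

lemma realv_quad: "(R :: real mat) \<in> carrier_mat k k \<Longrightarrow> x \<in> carrier_vec k \<Longrightarrow>
  x \<bullet> (R *\<^sub>v x) = (\<Sum>i<k. \<Sum>j<k. R $$ (i,j) * x $ i * x $ j)"
  by (auto simp: scalar_prod_def atLeast0LessThan sum_distrib_left mult_ac intro!: sum.cong)

lemma pos_quad: assumes "A \<in> Sym_pos k" and a: "a \<in> carrier_vec k" "a \<noteq> 0\<^sub>v k"
  shows "Re ((A *\<^sub>v a) \<bullet>c a) > 0"
proof -
  have Ac: "A \<in> carrier_mat k k" and sym: "transpose_mat A = A" and pd: "pos_def_real k (re_mat A)"
    using assms unfolding Sym_pos_def sym_mat_def by auto
  have symij: "A $$ (j,i) = A $$ (i,j)" if "i < k" "j < k" for i j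
    using arg_cong[OF sym, of "\<lambda>M. M $$ (i,j)"] that Ac by auto
  define x where "x = map_vec Re a"
  define y where "y = map_vec Im a"
  define R where "R = re_mat A"
  have xc: "x \<in> carrier_vec k" "y \<in> carrier_vec k" and Rc: "R \<in> carrier_mat k k"
    using a Ac unfolding x_def y_def R_def re_mat_def by auto
  have Rij: "R $$ (i,j) = Re (A $$ (i,j))" if "i < k" "j < k" for i j
    using that Ac unfolding R_def re_mat_def by auto
  have "(A *\<^sub>v a) \<bullet>c a = (\<Sum>i<k. (\<Sum>j<k. A $$ (i,j) * a $ j) * cnj (a $ i))"
    using Ac a by (subst cs_sum[of _ k]) (auto simp: Av_sum simp del: index_mult_mat_vec intro!: sum.cong)
  also have "\<dots> = (\<Sum>i<k. \<Sum>j<k. A $$ (i,j) * a $ j * cnj (a $ i))"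
    by (simp add: sum_distrib_right)
  finally have "Re ((A *\<^sub>v a) \<bullet>c a) = (\<Sum>i<k. \<Sum>j<k. Re (A $$ (i,j) * a $ j * cnj (a $ i)))"
    by (simp only: Re_sum)
  also have "\<dots> = (\<Sum>i<k. \<Sum>j<k. R $$ (i,j) * x $ i * x $ j + R $$ (i,j) * y $ i * y $ j
       - Im (A $$ (i,j)) * (x $ i * y $ j - x $ j * y $ i))"
    using a xc by (intro sum.cong refl) (auto simp: Rij x_def y_def algebra_simps)
  also have "\<dots> = x \<bullet> (R *\<^sub>v x) + y \<bullet> (R *\<^sub>v y) - (\<Sum>i<k. \<Sum>j<k. Im (A $$ (i,j)) * (x $ i * y $ j - x $ j * y $ i))"
    using Rc xc by (simp add: realv_quad sum.distrib sum_subtractf)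
  also have "(\<Sum>i<k. \<Sum>j<k. Im (A $$ (i,j)) * (x $ i * y $ j - x $ j * y $ i)) = 0"
  proof -
    have "(\<Sum>i<k. \<Sum>j<k. Im (A $$ (i,j)) * (x $ j * y $ i)) = (\<Sum>j<k. \<Sum>i<k. Im (A $$ (i,j)) * (x $ j * y $ i))"
      by (rule sum.swap)
    also have "\<dots> = (\<Sum>i<k. \<Sum>j<k. Im (A $$ (i,j)) * (x $ i * y $ j))"
      by (intro sum.cong refl) (simp add: symij)
    finally show ?thesis by (simp add: sum_subtractf algebra_simps)
  qed
  finally have eq: "Re ((A *\<^sub>v a) \<bullet>c a) = x \<bullet> (R *\<^sub>v x) + y \<bullet> (R *\<^sub>v y)" by simp
  have ge: "v \<bullet> (R *\<^sub>v v) \<ge> 0" if "v \<in> carrier_vec k" for v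
  proof (cases "v = 0\<^sub>v k")
    case True then show ?thesis using Rc by simp
  next
    case False then show ?thesis using pd that unfolding pos_def_real_def R_def by force
  qed
  have "x \<noteq> 0\<^sub>v k \<or> y \<noteq> 0\<^sub>v k"
  proof (rule ccontr)
    assume "\<not> ?thesis"
    then have "a = 0\<^sub>v k" using a
      by (intro eq_vecI) (auto simp: x_def y_def vec_eq_iff complex_eq_iff)
    with a show False by simp
  qed
  then have "x \<bullet> (R *\<^sub>v x) > 0 \<or> y \<bullet> (R *\<^sub>v y) > 0"
    using pd xc unfolding pos_def_real_def R_def by auto
  then show ?thesis unfolding eq using ge xc by (meson add_pos_nonneg add_nonneg_pos)
qed

lemma vswap: "x \<in> carrier_vec k \<Longrightarrow> q \<in> carrier_vec k \<Longrightarrow> w = q - x \<Longrightarrow> x = q - (w :: complex vec)"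
  by (auto simp: vec_eq_iff)

lemma vswap2: "x \<in> carrier_vec k \<Longrightarrow> p \<in> carrier_vec k \<Longrightarrow> a = p + x \<Longrightarrow> x = a - (p :: complex vec)"
  by (auto simp: vec_eq_iff)

definition rel :: "nat \<Rightarrow> complex mat \<Rightarrow> (complex vec \<times> complex vec) set" where
  "rel k P = {(v + P *\<^sub>v v, v - P *\<^sub>v v) | v. v \<in> carrier_vec k}"

locale two =
  fixes d :: nat and A B :: "complex mat"
  assumes A: "A \<in> carrier_mat (2*d) (2*d)" and B: "B \<in> carrier_mat (2*d) (2*d)"
begin

abbreviation "T \<equiv> theta_mat d"
abbreviation "n \<equiv> 2*d"

lemma AB_v[simp]: "v \<in> carrier_vec n \<Longrightarrow> A *\<^sub>v v \<in> carrier_vec n"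
  "v \<in> carrier_vec n \<Longrightarrow> B *\<^sub>v v \<in> carrier_vec n"
  using A B by (auto intro: mult_mat_vec_carrier)

lemma AB_dims[simp]: "dim_row A = n" "dim_col A = n" "dim_row B = n" "dim_col B = n"
  using A B unfolding carrier_mat_def by auto

definition sol :: "complex vec \<Rightarrow> complex vec \<Rightarrow> complex vec \<Rightarrow> bool" where
  "sol z a b \<longleftrightarrow> z \<in> carrier_vec n \<and> a \<in> carrier_vec n \<and> b \<in> carrier_vec n \<and>
     T *\<^sub>v (A *\<^sub>v a) - b = - z \<and> a + T *\<^sub>v (B *\<^sub>v b) = z"

lemma TAT: "T * A * T \<in> carrier_mat n n" "T * B * T \<in> carrier_mat n n"
  using A B by (meson mult_carrier_mat theta_carrier)+

lemma TAT_v: "v \<in> carrier_vec n \<Longrightarrow> (T * A * T) *\<^sub>v v = T *\<^sub>v (A *\<^sub>v (T *\<^sub>v v))"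
  "v \<in> carrier_vec n \<Longrightarrow> (T * B * T) *\<^sub>v v = T *\<^sub>v (B *\<^sub>v (T *\<^sub>v v))"
proof -
  fix v :: "complex vec" assume v: "v \<in> carrier_vec n"
  have TA: "T * A \<in> carrier_mat n n" "T * B \<in> carrier_mat n n" using A B by (meson mult_carrier_mat theta_carrier)+
  show "(T * A * T) *\<^sub>v v = T *\<^sub>v (A *\<^sub>v (T *\<^sub>v v))"
    using assoc_mult_mat_vec[OF TA(1) theta_carrier v] assoc_mult_mat_vec[OF theta_carrier A, of "T *\<^sub>v v"] v mult_mat_vec_carrier[OF theta_carrier v] by auto
  show "(T * B * T) *\<^sub>v v = T *\<^sub>v (B *\<^sub>v (T *\<^sub>v v))"
    using assoc_mult_mat_vec[OF TA(2) theta_carrier v] assoc_mult_mat_vec[OF theta_carrier B, of "T *\<^sub>v v"] v mult_mat_vec_carrier[OF theta_carrier v] by auto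
qed

lemma uminus_T: "q \<in> carrier_vec n \<Longrightarrow> (- T) *\<^sub>v q = - (T *\<^sub>v q)"
  by (rule uminus_mult_mat_vec) auto

lemma M_carrier: "M_mat d A B \<in> carrier_mat (n+n) (n+n)"
  unfolding M_mat_def using TAT by (intro four_block_carrier_mat) auto

lemma M_char: assumes p: "p \<in> carrier_vec n" and q: "q \<in> carrier_vec n" and z: "z \<in> carrier_vec n"
  shows "M_mat d A B *\<^sub>v (p @\<^sub>v q) = J_mat d *\<^sub>v z \<longleftrightarrow> sol z (T *\<^sub>v p) (T *\<^sub>v q)"
proof -
  have "M_mat d A B *\<^sub>v (p @\<^sub>v q) = (T *\<^sub>v (A *\<^sub>v (T *\<^sub>v p)) - T *\<^sub>v q) @\<^sub>v (T *\<^sub>v p + T *\<^sub>v (B *\<^sub>v (T *\<^sub>v q)))"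
    unfolding M_mat_def using TAT p q
    apply (subst four_block_mat_mult_vec[of _ n n _ n _ n])
    by (auto simp: TAT_v minus_add_uminus_vec[of _ n, symmetric] uminus_T)
  then show ?thesis using p q z A B
    by (simp add: J_mult sol_def theta_theta append_vec_eq[of _ n])
qed


lemma sol_Tz: assumes "sol z a b"
  shows "T *\<^sub>v z = T *\<^sub>v a + B *\<^sub>v b" "T *\<^sub>v z = T *\<^sub>v b - A *\<^sub>v a"
proof -
  have c: "z \<in> carrier_vec n" "a \<in> carrier_vec n" "b \<in> carrier_vec n"
    and e1: "T *\<^sub>v (A *\<^sub>v a) - b = - z" and e2: "a + T *\<^sub>v (B *\<^sub>v b) = z"
    using assms unfolding sol_def by auto
  from e2 have "T *\<^sub>v z = T *\<^sub>v a + T *\<^sub>v (T *\<^sub>v (B *\<^sub>v b))"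
    using c by (auto simp: mult_add_distrib_mat_vec[OF theta_carrier])
  then show "T *\<^sub>v z = T *\<^sub>v a + B *\<^sub>v b" using c by (simp add: theta_theta)
  have "z = b - T *\<^sub>v (A *\<^sub>v a)"
  proof (rule eq_vecI)
    fix i assume i: "i < dim_vec (b - T *\<^sub>v (A *\<^sub>v a))"
    have "(T *\<^sub>v (A *\<^sub>v a) - b) $ i = (- z) $ i" using e1 by simp
    then have h: "(T *\<^sub>v (A *\<^sub>v a)) $ i - b $ i = - z $ i" using i c by (simp del: index_mult_mat_vec)
    have "z $ i = b $ i - (T *\<^sub>v (A *\<^sub>v a)) $ i" by (metis h minus_diff_eq minus_minus)
    then show "z $ i = (b - T *\<^sub>v (A *\<^sub>v a)) $ i" using i c
      by (simp del: index_mult_mat_vec)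
  qed (use c in auto)
  then have "T *\<^sub>v z = T *\<^sub>v b - T *\<^sub>v (T *\<^sub>v (A *\<^sub>v a))"
    using c by (auto simp: mult_minus_distrib_mat_vec[OF theta_carrier])
  then show "T *\<^sub>v z = T *\<^sub>v b - A *\<^sub>v a" using c by (simp add: theta_theta)
qed

lemma energy: assumes "sol z a b"
  shows "Re ((T *\<^sub>v (b - a)) \<bullet>c z) = Re ((A *\<^sub>v a) \<bullet>c a) + Re ((B *\<^sub>v b) \<bullet>c b)"
proof -
  have c: "z \<in> carrier_vec n" "a \<in> carrier_vec n" "b \<in> carrier_vec n"
    using assms unfolding sol_def by auto
  have "(T *\<^sub>v (b - a)) \<bullet>c z = (b - a) \<bullet>c (T *\<^sub>v z)"
    using c by (intro theta_herm) auto
  also have "\<dots> = b \<bullet>c (T *\<^sub>v z) - a \<bullet>c (T *\<^sub>v z)"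
    using c by (intro cs_minus_left) auto
  also have "\<dots> = b \<bullet>c (T *\<^sub>v a + B *\<^sub>v b) - a \<bullet>c (T *\<^sub>v b - A *\<^sub>v a)"
    using sol_Tz[OF assms] by metis
  also have "\<dots> = b \<bullet>c (T *\<^sub>v a) + b \<bullet>c (B *\<^sub>v b) - (a \<bullet>c (T *\<^sub>v b) - a \<bullet>c (A *\<^sub>v a))"
    using c by (simp add: cs_add_right[of _ n] cs_minus_right[of _ n])
  also have "a \<bullet>c (T *\<^sub>v b) = (T *\<^sub>v a) \<bullet>c b"
    using c by (intro theta_herm[symmetric]) auto
  finally have *: "(T *\<^sub>v (b - a)) \<bullet>c z = b \<bullet>c (T *\<^sub>v a) + b \<bullet>c (B *\<^sub>v b) - ((T *\<^sub>v a) \<bullet>c b - a \<bullet>c (A *\<^sub>v a))" .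
  have r1: "Re (b \<bullet>c (T *\<^sub>v a)) = Re ((T *\<^sub>v a) \<bullet>c b)" 
    and r2: "Re (b \<bullet>c (B *\<^sub>v b)) = Re ((B *\<^sub>v b) \<bullet>c b)"
    and r3: "Re (a \<bullet>c (A *\<^sub>v a)) = Re ((A *\<^sub>v a) \<bullet>c a)"
    using c by (auto intro!: cs_swap_Re)
  show ?thesis unfolding * using r1 r2 r3 by simp
qed


end

lemma pos_quad_ge: assumes "A \<in> Sym_pos k" and a: "a \<in> carrier_vec k"
  shows "Re ((A *\<^sub>v a) \<bullet>c a) \<ge> 0"
proof (cases "a = 0\<^sub>v k")
  case True
  have "A \<in> carrier_mat k k" using assms unfolding Sym_pos_def sym_mat_def by auto
  then show ?thesis using True by (simp add: cs_sum)
next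
  case False then show ?thesis using pos_quad[OF assms(1) a] by simp
qed

lemma J_carrier: "J_mat d \<in> carrier_mat (2*d + 2*d) (2*d)"
  unfolding J_mat_def by (rule carrier_append_rows) auto

lemma mv_zero[simp]: "M \<in> carrier_mat k k' \<Longrightarrow> M *\<^sub>v 0\<^sub>v k' = 0\<^sub>v k"
  by (intro eq_vecI) auto

locale twopos = two +
  assumes Apos: "A \<in> Sym_pos (2*d)" and Bpos: "B \<in> Sym_pos (2*d)"
begin

lemma sol_pos: assumes "sol z a b" "z \<noteq> 0\<^sub>v n"
  shows "Re ((T *\<^sub>v (b - a)) \<bullet>c z) > 0"
proof -
  have c: "z \<in> carrier_vec n" "a \<in> carrier_vec n" "b \<in> carrier_vec n"
    and e2: "a + T *\<^sub>v (B *\<^sub>v b) = z" using assms unfolding sol_def by auto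
  have "a \<noteq> 0\<^sub>v n \<or> b \<noteq> 0\<^sub>v n"
  proof (rule ccontr)
    assume "\<not> ?thesis"
    then have "z = 0\<^sub>v n" using e2 B mv_zero[OF B] mv_zero[OF theta_carrier] by auto
    with assms show False by simp
  qed
  then show ?thesis unfolding energy[OF assms(1)]
    using pos_quad[OF Apos c(2)] pos_quad[OF Bpos c(3)] pos_quad_ge[OF Apos c(2)] pos_quad_ge[OF Bpos c(3)]
    by (meson add_pos_nonneg add_nonneg_pos)
qed

lemma sol_zero: assumes "sol (0\<^sub>v n) a b" shows "a = 0\<^sub>v n" "b = 0\<^sub>v n"
proof -
  have c: "a \<in> carrier_vec n" "b \<in> carrier_vec n" using assms unfolding sol_def by auto
  have "Re ((T *\<^sub>v (b - a)) \<bullet>c 0\<^sub>v n) = 0" using c by (simp add: cs_sum)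
  then have "Re ((A *\<^sub>v a) \<bullet>c a) + Re ((B *\<^sub>v b) \<bullet>c b) = 0" using energy[OF assms] by simp
  then have "Re ((A *\<^sub>v a) \<bullet>c a) = 0" "Re ((B *\<^sub>v b) \<bullet>c b) = 0"
    using pos_quad_ge[OF Apos c(1)] pos_quad_ge[OF Bpos c(2)] by linarith+
  then show "a = 0\<^sub>v n" "b = 0\<^sub>v n" using pos_quad[OF Apos c(1)] pos_quad[OF Bpos c(2)] by force+
qed

lemma M_det: "det (M_mat d A B) \<noteq> 0"
proof
  assume "det (M_mat d A B) = 0"
  then obtain v where v: "v \<in> carrier_vec (n+n)" "v \<noteq> 0\<^sub>v (n+n)" "M_mat d A B *\<^sub>v v = 0\<^sub>v (n+n)"
    using det_0_iff_vec_prod_zero[OF M_carrier] by blast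
  define p where "p = vec_first v n"
  define q where "q = vec_last v n"
  have pq: "p \<in> carrier_vec n" "q \<in> carrier_vec n" "v = p @\<^sub>v q" using v(1) unfolding p_def q_def by auto
  have "J_mat d *\<^sub>v 0\<^sub>v n = 0\<^sub>v (n+n)" by (rule eq_vecI) (auto simp: J_mult)
  then have "M_mat d A B *\<^sub>v (p @\<^sub>v q) = J_mat d *\<^sub>v 0\<^sub>v n" using v pq by simp
  then have "sol (0\<^sub>v n) (T *\<^sub>v p) (T *\<^sub>v q)" using M_char pq by simp
  from sol_zero[OF this] have "T *\<^sub>v (T *\<^sub>v p) = 0\<^sub>v n" "T *\<^sub>v (T *\<^sub>v q) = 0\<^sub>v n" by auto
  then have "p = 0\<^sub>v n" "q = 0\<^sub>v n" using theta_theta pq by auto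
  then have "v = 0\<^sub>v (n+n)" using pq by (auto intro!: eq_vecI)
  with v show False by simp
qed

lemma M_inv: "invertible_mat (M_mat d A B)"
proof -
  have "M_mat d A B \<in> Units (ring_mat TYPE(complex) (n+n) ())"
    by (rule det_non_zero_imp_unit[OF M_carrier M_det])
  then obtain N where N: "N \<in> carrier_mat (n+n) (n+n)" "N * M_mat d A B = 1\<^sub>m (n+n)" "M_mat d A B * N = 1\<^sub>m (n+n)"
    unfolding Units_def ring_mat_def by auto
  then show ?thesis using M_carrier unfolding invertible_mat_def inverts_mat_def square_mat.simps
    by auto
qed


definition "Mi = inv_mat (M_mat d A B)"

lemma Mi: "Mi \<in> carrier_mat (n+n) (n+n)" "M_mat d A B * Mi = 1\<^sub>m (n+n)" "Mi * M_mat d A B = 1\<^sub>m (n+n)"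
proof -
  have "\<exists>N. inverts_mat (M_mat d A B) N \<and> inverts_mat N (M_mat d A B)"
    using M_inv unfolding invertible_mat_def by auto
  then have i: "inverts_mat (M_mat d A B) Mi \<and> inverts_mat Mi (M_mat d A B)"
    unfolding Mi_def inv_mat_def by (rule someI_ex)
  then have 1: "M_mat d A B * Mi = 1\<^sub>m (n+n)" and 2: "Mi * M_mat d A B = 1\<^sub>m (dim_row Mi)"
    using M_carrier unfolding inverts_mat_def by auto
  have "dim_col Mi = n+n" using arg_cong[OF 1, of dim_col] by simp
  moreover have "dim_row Mi = n+n" using arg_cong[OF 2, of dim_col] M_carrier by simp
  ultimately show "Mi \<in> carrier_mat (n+n) (n+n)" by auto
  show "M_mat d A B * Mi = 1\<^sub>m (n+n)" by (rule 1)
  show "Mi * M_mat d A B = 1\<^sub>m (n+n)" using 2 \<open>dim_row Mi = n+n\<close> by simp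
qed

lemma sharp_v: assumes "z \<in> carrier_vec n"
  shows "sharp d A B *\<^sub>v z = transpose_mat (J_mat d) *\<^sub>v (Mi *\<^sub>v (J_mat d *\<^sub>v z))"
proof -
  have JT: "transpose_mat (J_mat d) \<in> carrier_mat n (n+n)" using J_carrier by auto
  have JTM: "transpose_mat (J_mat d) * Mi \<in> carrier_mat n (n+n)" using JT Mi(1) by auto
  have Jz: "J_mat d *\<^sub>v z \<in> carrier_vec (n+n)" using J_carrier assms by (rule mult_mat_vec_carrier)
  show ?thesis unfolding sharp_def Mi_def[symmetric]
    using assoc_mult_mat_vec[OF JTM J_carrier assms] assoc_mult_mat_vec[OF JT Mi(1) Jz] by simp
qed

lemma sharp_carrier: "sharp d A B \<in> carrier_mat n n"
  unfolding sharp_def Mi_def[symmetric] using J_carrier Mi(1)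
  by (meson mult_carrier_mat transpose_carrier_mat)

lemma sharp_apply: assumes "sol z a b"
  shows "sharp d A B *\<^sub>v z = T *\<^sub>v (b - a)"
proof -
  have c: "z \<in> carrier_vec n" "a \<in> carrier_vec n" "b \<in> carrier_vec n"
    using assms unfolding sol_def by auto
  have "sol z (T *\<^sub>v (T *\<^sub>v a)) (T *\<^sub>v (T *\<^sub>v b))" using assms c by (simp add: theta_theta)
  then have Mu: "M_mat d A B *\<^sub>v (T *\<^sub>v a @\<^sub>v T *\<^sub>v b) = J_mat d *\<^sub>v z"
    using M_char c by simp
  have uc: "T *\<^sub>v a @\<^sub>v T *\<^sub>v b \<in> carrier_vec (n+n)" using c by (intro append_carrier_vec T_v_carrier)
  have "Mi *\<^sub>v (J_mat d *\<^sub>v z) = (Mi * M_mat d A B) *\<^sub>v (T *\<^sub>v a @\<^sub>v T *\<^sub>v b)"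
    unfolding Mu[symmetric] using assoc_mult_mat_vec[OF Mi(1) M_carrier uc] by simp
  also have "\<dots> = T *\<^sub>v a @\<^sub>v T *\<^sub>v b" unfolding Mi(3) using uc
    by (intro one_mult_mat_vec)
  finally show ?thesis unfolding sharp_v[OF c(1)] using c
    by (simp add: JT_mult mult_minus_distrib_mat_vec[OF theta_carrier])
qed

lemma sharp_exists: assumes "z \<in> carrier_vec n" shows "\<exists>a b. sol z a b"
proof -
  define u where "u = Mi *\<^sub>v (J_mat d *\<^sub>v z)"
  have Jz: "J_mat d *\<^sub>v z \<in> carrier_vec (n+n)" using J_carrier assms by (rule mult_mat_vec_carrier)
  have uc: "u \<in> carrier_vec (n+n)" unfolding u_def using Mi(1) Jz by (rule mult_mat_vec_carrier)
  have "M_mat d A B *\<^sub>v u = (M_mat d A B * Mi) *\<^sub>v (J_mat d *\<^sub>v z)"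
    unfolding u_def using assoc_mult_mat_vec[OF M_carrier Mi(1) Jz] by simp
  also have "\<dots> = J_mat d *\<^sub>v z" unfolding Mi(2) using Jz
    by (intro one_mult_mat_vec)
  finally have Mu: "M_mat d A B *\<^sub>v u = J_mat d *\<^sub>v z" .
  define p where "p = vec_first u n"
  define q where "q = vec_last u n"
  have pq: "p \<in> carrier_vec n" "q \<in> carrier_vec n" "u = p @\<^sub>v q" using uc unfolding p_def q_def by auto
  have "sol z (T *\<^sub>v p) (T *\<^sub>v q)" using M_char[OF pq(1,2) assms] Mu pq(3) by simp
  then show ?thesis by blast
qed


lemma quad_form: assumes "sol x a b" "sol y a' b'"
  shows "y \<bullet> (sharp d A B *\<^sub>v x) = - ((T *\<^sub>v a') \<bullet> b + (B *\<^sub>v b') \<bullet> b - ((T *\<^sub>v b') \<bullet> a - (A *\<^sub>v a') \<bullet> a))"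
proof -
  have c: "x \<in> carrier_vec n" "a \<in> carrier_vec n" "b \<in> carrier_vec n"
          "y \<in> carrier_vec n" "a' \<in> carrier_vec n" "b' \<in> carrier_vec n"
    using assms unfolding sol_def by auto
  have "y \<bullet> (sharp d A B *\<^sub>v x) = y \<bullet> (T *\<^sub>v (b - a))" using sharp_apply[OF assms(1)] by simp
  also have "\<dots> = - ((T *\<^sub>v y) \<bullet> (b - a))" using theta_anti[of y d "b - a"] c by simp
  also have "(T *\<^sub>v y) \<bullet> (b - a) = (T *\<^sub>v y) \<bullet> b - (T *\<^sub>v y) \<bullet> a"
    using c by (intro scalar_prod_minus_distrib[of _ n]) auto
  also have "(T *\<^sub>v y) \<bullet> b = (T *\<^sub>v a' + B *\<^sub>v b') \<bullet> b" using sol_Tz[OF assms(2)] by simp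
  also have "\<dots> = (T *\<^sub>v a') \<bullet> b + (B *\<^sub>v b') \<bullet> b"
    using c by (intro add_scalar_prod_distrib[of _ n]) auto
  also have "(T *\<^sub>v y) \<bullet> a = (T *\<^sub>v b' - A *\<^sub>v a') \<bullet> a" using sol_Tz[OF assms(2)] by simp
  also have "\<dots> = (T *\<^sub>v b') \<bullet> a - (A *\<^sub>v a') \<bullet> a"
    using c by (intro minus_scalar_prod_distrib[of _ n]) auto
  finally show ?thesis .
qed

lemma symm_swap: assumes M: "(M :: complex mat) \<in> carrier_mat n n" "transpose_mat M = M" and u: "u \<in> carrier_vec n" "v \<in> carrier_vec n"
  shows "(M *\<^sub>v u) \<bullet> v = (M *\<^sub>v v) \<bullet> u"
proof -
  have "(M *\<^sub>v u) \<bullet> v = v \<bullet> (M *\<^sub>v u)" using M u by (intro comm_scalar_prod[of _ n]) auto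
  also have "\<dots> = (transpose_mat M *\<^sub>v v) \<bullet> u" using transpose_vec_mult_scalar[OF M(1) u(1) u(2)] by simp
  finally show ?thesis using M by simp
qed

lemma sharp_bil: assumes "x \<in> carrier_vec n" "y \<in> carrier_vec n"
  shows "y \<bullet> (sharp d A B *\<^sub>v x) = x \<bullet> (sharp d A B *\<^sub>v y)"
proof -
  obtain a b where s1: "sol x a b" using sharp_exists[OF assms(1)] by blast
  obtain a' b' where s2: "sol y a' b'" using sharp_exists[OF assms(2)] by blast
  have c: "a \<in> carrier_vec n" "b \<in> carrier_vec n" "a' \<in> carrier_vec n" "b' \<in> carrier_vec n"
    using s1 s2 unfolding sol_def by auto
  have As: "transpose_mat A = A" and Bs: "transpose_mat B = B"
    using Apos Bpos unfolding Sym_pos_def sym_mat_def by auto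
  have e1: "(T *\<^sub>v a') \<bullet> b = - ((T *\<^sub>v b) \<bullet> a')"
    using theta_anti[of a' d b] c comm_scalar_prod[of a' n "T *\<^sub>v b"] by simp
  have e2: "(T *\<^sub>v b') \<bullet> a = - ((T *\<^sub>v a) \<bullet> b')"
    using theta_anti[of b' d a] c comm_scalar_prod[of b' n "T *\<^sub>v a"] by simp
  have e3: "(B *\<^sub>v b') \<bullet> b = (B *\<^sub>v b) \<bullet> b'" using symm_swap[OF B Bs c(4) c(2)] .
  have e4: "(A *\<^sub>v a') \<bullet> a = (A *\<^sub>v a) \<bullet> a'" using symm_swap[OF A As c(3) c(1)] .
  show ?thesis unfolding quad_form[OF s1 s2] quad_form[OF s2 s1] e1 e2 e3 e4 by simp
qed

lemma sharp_sym: "transpose_mat (sharp d A B) = sharp d A B"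
proof (rule eq_matI)
  have C: "sharp d A B \<in> carrier_mat n n" by (rule sharp_carrier)
  fix i j assume ij: "i < dim_row (sharp d A B)" "j < dim_col (sharp d A B)"
  then have ij': "i < n" "j < n" using C by auto
  have ent: "sharp d A B $$ (k,l) = unit_vec n k \<bullet> (sharp d A B *\<^sub>v unit_vec n l)" if "k < n" "l < n" for k l
    using that C by (subst scalar_prod_left_unit[of _ n]) auto
  show "transpose_mat (sharp d A B) $$ (i, j) = sharp d A B $$ (i, j)"
    using ij' C ent[of j i] ent[of i j] sharp_bil[of "unit_vec n i" "unit_vec n j"] by simp
qed (use sharp_carrier in auto)

lemma real_quad_link: assumes C: "C \<in> carrier_mat k k" and v: "v \<in> carrier_vec k"
  shows "v \<bullet> (re_mat C *\<^sub>v v) = Re ((C *\<^sub>v map_vec complex_of_real v) \<bullet>c map_vec complex_of_real v)"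
proof -
  let ?z = "map_vec complex_of_real v"
  have zc: "?z \<in> carrier_vec k" using v by auto
  have "(C *\<^sub>v ?z) \<bullet>c ?z = (\<Sum>i<k. (\<Sum>j<k. C $$ (i,j) * ?z $ j) * cnj (?z $ i))"
    using C zc by (subst cs_sum[of _ k]) (auto simp: Av_sum simp del: index_mult_mat_vec intro!: sum.cong)
  also have "\<dots> = (\<Sum>i<k. \<Sum>j<k. C $$ (i,j) * ?z $ j * cnj (?z $ i))"
    by (simp add: sum_distrib_right)
  finally have "Re ((C *\<^sub>v ?z) \<bullet>c ?z) = (\<Sum>i<k. \<Sum>j<k. Re (C $$ (i,j) * ?z $ j * cnj (?z $ i)))"
    by (simp only: Re_sum)
  also have "\<dots> = (\<Sum>i<k. \<Sum>j<k. re_mat C $$ (i,j) * v $ i * v $ j)"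
    using C v by (intro sum.cong refl) (auto simp: re_mat_def)
  also have "\<dots> = v \<bullet> (re_mat C *\<^sub>v v)"
    using C v by (subst realv_quad[of _ k]) (auto simp: re_mat_def)
  finally show ?thesis by simp
qed

lemma sharp_pos: "sharp d A B \<in> Sym_pos n"
proof -
  have C: "sharp d A B \<in> carrier_mat n n" by (rule sharp_carrier)
  have "pos_def_real n (re_mat (sharp d A B))"
    unfolding pos_def_real_def
  proof (intro conjI ballI impI)
    show "re_mat (sharp d A B) \<in> carrier_mat n n" using C by (simp add: re_mat_def)
    fix v :: "real vec" assume v: "v \<in> carrier_vec n" "v \<noteq> 0\<^sub>v n"
    let ?z = "map_vec complex_of_real v"
    have zc: "?z \<in> carrier_vec n" using v by auto
    have z0: "?z \<noteq> 0\<^sub>v n"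
    proof
      assume "?z = 0\<^sub>v n"
      then have "v = 0\<^sub>v n" using v by (auto simp: vec_eq_iff)
      with v show False by simp
    qed
    obtain a b where s: "sol ?z a b" using sharp_exists[OF zc] by blast
    show "v \<bullet> (re_mat (sharp d A B) *\<^sub>v v) > 0"
      unfolding real_quad_link[OF C v(1)] sharp_apply[OF s] using sol_pos[OF s z0] .
  qed
  then show ?thesis unfolding Sym_pos_def sym_mat_def using C sharp_sym by auto
qed


lemma rel_sharp: "rel n (sharp d A B * T) = rel n (B * T) O rel n (A * T)"
proof (intro equalityI subsetI)
  have C: "sharp d A B \<in> carrier_mat n n" by (rule sharp_carrier)
  fix st assume "st \<in> rel n (sharp d A B * T)"
  then obtain w where w: "w \<in> carrier_vec n" and st: "st = (w + (sharp d A B * T) *\<^sub>v w, w - (sharp d A B * T) *\<^sub>v w)"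
    unfolding rel_def by auto
  obtain a b where s: "sol (T *\<^sub>v w) a b" using sharp_exists[of "T *\<^sub>v w"] w by auto
  have c: "a \<in> carrier_vec n" "b \<in> carrier_vec n" using s unfolding sol_def by auto
  define p where "p = T *\<^sub>v a"
  define q where "q = T *\<^sub>v b"
  have pq: "p \<in> carrier_vec n" "q \<in> carrier_vec n" "a = T *\<^sub>v p" "b = T *\<^sub>v q"
    using c theta_theta unfolding p_def q_def by auto
  have CTw: "(sharp d A B * T) *\<^sub>v w = q - p"
    using assoc_mult_mat_vec[OF C theta_carrier w] sharp_apply[OF s] c
    unfolding p_def q_def by (simp add: mult_minus_distrib_mat_vec[OF theta_carrier])
  have "T *\<^sub>v (T *\<^sub>v w) = T *\<^sub>v a + B *\<^sub>v b" "T *\<^sub>v (T *\<^sub>v w) = T *\<^sub>v b - A *\<^sub>v a"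
    using sol_Tz[OF s] by auto
  then have e1: "w = p + B *\<^sub>v (T *\<^sub>v q)" and e2: "w = q - A *\<^sub>v (T *\<^sub>v p)"
    using w theta_theta pq unfolding p_def q_def by auto
  have BT: "(B * T) *\<^sub>v v = B *\<^sub>v (T *\<^sub>v v)" "(A * T) *\<^sub>v v = A *\<^sub>v (T *\<^sub>v v)" if "v \<in> carrier_vec n" for v
    using that assoc_mult_mat_vec[OF B theta_carrier] assoc_mult_mat_vec[OF A theta_carrier] by auto
  define m where "m = q - B *\<^sub>v (T *\<^sub>v q)"
  have "(fst st, m) \<in> rel n (B * T)"
    unfolding rel_def
  proof (intro CollectI exI conjI)
    show "q \<in> carrier_vec n" by (rule pq)
    show "(fst st, m) = (q + (B * T) *\<^sub>v q, q - (B * T) *\<^sub>v q)"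
      unfolding st CTw m_def BT[OF pq(2)] fst_conv using pq e1 w by (auto simp: vec_eq_iff simp del: index_mult_mat_vec)
  qed
  moreover have "(m, snd st) \<in> rel n (A * T)"
    unfolding rel_def
  proof (intro CollectI exI conjI)
    show "p \<in> carrier_vec n" by (rule pq)
    have "(m, snd st) = (p + A *\<^sub>v (T *\<^sub>v p), p - A *\<^sub>v (T *\<^sub>v p))"
      unfolding st CTw m_def using e1 vswap[OF _ pq(2) e2] pq w
      by (auto simp: vec_eq_iff simp del: index_mult_mat_vec)
    then show "(m, snd st) = (p + (A * T) *\<^sub>v p, p - (A * T) *\<^sub>v p)" using BT pq by simp
  qed
  ultimately show "st \<in> rel n (B * T) O rel n (A * T)" by (metis prod.collapse relcomp.relcompI)
next
  fix st assume "st \<in> rel n (B * T) O rel n (A * T)"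
  then obtain m where "(fst st, m) \<in> rel n (B * T)" "(m, snd st) \<in> rel n (A * T)" by auto
  then obtain q p where pq: "q \<in> carrier_vec n" "p \<in> carrier_vec n"
    and r1: "(fst st, m) = (q + (B * T) *\<^sub>v q, q - (B * T) *\<^sub>v q)"
    and r2: "(m, snd st) = (p + (A * T) *\<^sub>v p, p - (A * T) *\<^sub>v p)"
    unfolding rel_def by blast
  have BT: "(B * T) *\<^sub>v v = B *\<^sub>v (T *\<^sub>v v)" "(A * T) *\<^sub>v v = A *\<^sub>v (T *\<^sub>v v)" if "v \<in> carrier_vec n" for v
    using that assoc_mult_mat_vec[OF B theta_carrier] assoc_mult_mat_vec[OF A theta_carrier] by auto
  have C: "sharp d A B \<in> carrier_mat n n" by (rule sharp_carrier)
  define w where "w = p + B *\<^sub>v (T *\<^sub>v q)"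
  have wc: "w \<in> carrier_vec n" unfolding w_def using pq by auto
  have f1: "fst st = q + B *\<^sub>v (T *\<^sub>v q)" and f2: "snd st = p - A *\<^sub>v (T *\<^sub>v p)"
    and f3: "q - B *\<^sub>v (T *\<^sub>v q) = p + A *\<^sub>v (T *\<^sub>v p)"
    using r1 r2 BT pq by auto
  have eX: "A *\<^sub>v (T *\<^sub>v p) = (q - B *\<^sub>v (T *\<^sub>v q)) - p"
    using f3 pq by (intro vswap2) auto
  have e2: "A *\<^sub>v (T *\<^sub>v p) - q = - w" unfolding w_def using eX pq
    by (auto simp: vec_eq_iff simp del: index_mult_mat_vec)
  have "sol (T *\<^sub>v w) (T *\<^sub>v p) (T *\<^sub>v q)"
    unfolding sol_def
  proof (intro conjI)
    show "T *\<^sub>v (A *\<^sub>v (T *\<^sub>v p)) - T *\<^sub>v q = - (T *\<^sub>v w)"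
      using arg_cong[OF e2, of "\<lambda>x. T *\<^sub>v x"] pq wc
      by (simp add: mult_minus_distrib_mat_vec[OF theta_carrier] theta_theta mv_uminus[OF theta_carrier])
    show "T *\<^sub>v p + T *\<^sub>v (B *\<^sub>v (T *\<^sub>v q)) = T *\<^sub>v w"
      unfolding w_def using pq by (simp add: mult_add_distrib_mat_vec[OF theta_carrier])
  qed (use pq wc in auto)
  from sharp_apply[OF this] have CTw: "(sharp d A B * T) *\<^sub>v w = q - p"
    using assoc_mult_mat_vec[OF C theta_carrier wc] pq
    by (simp add: mult_minus_distrib_mat_vec[OF theta_carrier] theta_theta)
  have "st = (w + (sharp d A B * T) *\<^sub>v w, w - (sharp d A B * T) *\<^sub>v w)"
    unfolding CTw using f1 f2 eX pq unfolding w_def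
    by (cases st) (auto simp: vec_eq_iff simp del: index_mult_mat_vec)
  then show "st \<in> rel n (sharp d A B * T)" unfolding rel_def using wc by auto
qed

end

lemma idx_add: "x \<in> carrier_vec k \<Longrightarrow> y \<in> carrier_vec k \<Longrightarrow> i < k \<Longrightarrow> (x + y) $ i = x $ i + (y $ i :: complex)"
  by auto
lemma idx_minus: "x \<in> carrier_vec k \<Longrightarrow> y \<in> carrier_vec k \<Longrightarrow> i < k \<Longrightarrow> (x - y) $ i = x $ i - (y $ i :: complex)"
  by auto

lemma twoposI: "A \<in> Sym_pos (2*d) \<Longrightarrow> B \<in> Sym_pos (2*d) \<Longrightarrow> twopos d A B"
  unfolding twopos_def two_def twopos_axioms_def Sym_pos_def sym_mat_def by auto

lemma c_lin: "(a::complex) + b = c + e \<Longrightarrow> a - b = c - e \<Longrightarrow> b = e \<and> a = c"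
  by (metis add_diff_cancel_left' add_diff_eq diff_add_cancel diff_diff_eq2 mult_2 mult_cancel_left zero_neq_numeral)

lemma mat_eq_vec: assumes "P \<in> carrier_mat k k'" "Q \<in> carrier_mat k k'" "\<And>v. v \<in> carrier_vec k' \<Longrightarrow> P *\<^sub>v v = Q *\<^sub>v (v :: complex vec)"
  shows "P = Q"
proof (rule eq_matI)
  fix i j assume ij: "i < dim_row Q" "j < dim_col Q"
  have "(P *\<^sub>v unit_vec k' j) $ i = (Q *\<^sub>v unit_vec k' j) $ i" using assms(3)[of "unit_vec k' j"] by simp
  then show "P $$ (i, j) = Q $$ (i, j)" using ij assms(1,2) by simp
qed (use assms in auto)

lemma rel_inj: assumes P: "(P :: complex mat) \<in> carrier_mat k k" and Q: "Q \<in> carrier_mat k k" and r: "rel k P = rel k Q"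
  shows "P = Q"
proof (rule mat_eq_vec[OF P Q])
  fix v :: "complex vec" assume v: "v \<in> carrier_vec k"
  have "(v + P *\<^sub>v v, v - P *\<^sub>v v) \<in> rel k P" using v unfolding rel_def by auto
  then have "(v + P *\<^sub>v v, v - P *\<^sub>v v) \<in> rel k Q" using r by simp
  then obtain u where u: "u \<in> carrier_vec k" "v + P *\<^sub>v v = u + Q *\<^sub>v u" "v - P *\<^sub>v v = u - Q *\<^sub>v u"
    unfolding rel_def by auto
  have "v $ i = u $ i \<and> (P *\<^sub>v v) $ i = (Q *\<^sub>v u) $ i" if i: "i < k" for i
  proof -
    have "(v + P *\<^sub>v v) $ i = (u + Q *\<^sub>v u) $ i" "(v - P *\<^sub>v v) $ i = (u - Q *\<^sub>v u) $ i" using u by auto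
    moreover have Pv: "P *\<^sub>v v \<in> carrier_vec k" "Q *\<^sub>v u \<in> carrier_vec k"
      using P Q u v by (auto intro: mult_mat_vec_carrier)
    ultimately have "v $ i + (P *\<^sub>v v) $ i = u $ i + (Q *\<^sub>v u) $ i" "v $ i - (P *\<^sub>v v) $ i = u $ i - (Q *\<^sub>v u) $ i"
      using idx_add[OF v Pv(1) i] idx_add[OF u(1) Pv(2) i] idx_minus[OF v Pv(1) i] idx_minus[OF u(1) Pv(2) i]
      by (simp_all only:)
    then show ?thesis using c_lin by blast
  qed
  then have "v = u" "P *\<^sub>v v = Q *\<^sub>v u" using u v P Q by (auto intro!: eq_vecI)
  then show "P *\<^sub>v v = Q *\<^sub>v v" by simp
qed

lemma cancel_T: assumes P: "P \<in> carrier_mat (2*d) (2*d)" and Q: "Q \<in> carrier_mat (2*d) (2*d)"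
  and e: "P * theta_mat d = Q * theta_mat d" shows "P = Q"
proof (rule mat_eq_vec[OF P Q])
  fix v :: "complex vec" assume v: "v \<in> carrier_vec (2*d)"
  have "P *\<^sub>v v = (P * theta_mat d) *\<^sub>v (theta_mat d *\<^sub>v v)"
    using assoc_mult_mat_vec[OF P theta_carrier T_v_carrier[OF v]] theta_theta[OF v] by simp
  also have "\<dots> = Q *\<^sub>v v"
    unfolding e using assoc_mult_mat_vec[OF Q theta_carrier T_v_carrier[OF v]] theta_theta[OF v] by simp
  finally show "P *\<^sub>v v = Q *\<^sub>v v" .
qed

lemma inj_det: assumes P: "(P :: complex mat) \<in> carrier_mat k k" and dt: "det (1\<^sub>m k + P) \<noteq> 0"
  and v: "v \<in> carrier_vec k" and e: "v + P *\<^sub>v v = 0\<^sub>v k" shows "v = 0\<^sub>v k"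
proof (rule ccontr)
  assume "v \<noteq> 0\<^sub>v k"
  moreover have "(1\<^sub>m k + P) *\<^sub>v v = 0\<^sub>v k"
    using e P v by (simp add: add_mult_distrib_mat_vec[of _ k k])
  ultimately have "det (1\<^sub>m k + P) = 0"
    using det_0_iff_vec_prod_zero[of "1\<^sub>m k + P" k] P v by auto
  with dt show False by simp
qed

lemma qnd_step: assumes "A \<in> Sym_qnd d" "B \<in> Sym_qnd d" shows "sharp d A B \<in> Sym_qnd d"
proof -
  have Ap: "A \<in> Sym_pos (2*d)" and Bp: "B \<in> Sym_pos (2*d)"
    and dA: "det (1\<^sub>m (2*d) + A * theta_mat d) \<noteq> 0" and dB: "det (1\<^sub>m (2*d) + B * theta_mat d) \<noteq> 0"
    using assms unfolding Sym_qnd_def by auto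
  interpret twopos d A B by (rule twoposI[OF Ap Bp])
  let ?C = "sharp d A B"
  have C: "?C \<in> carrier_mat n n" by (rule sharp_carrier)
  have CT: "?C * T \<in> carrier_mat n n" "A * T \<in> carrier_mat n n" "B * T \<in> carrier_mat n n"
    using C A B by (meson mult_carrier_mat theta_carrier)+
  have "det (1\<^sub>m n + ?C * T) \<noteq> 0"
  proof
    assume "det (1\<^sub>m n + ?C * T) = 0"
    have IC: "1\<^sub>m n + ?C * T \<in> carrier_mat n n" using CT(1) by auto
    obtain w where w: "w \<in> carrier_vec n" "w \<noteq> 0\<^sub>v n" "(1\<^sub>m n + ?C * T) *\<^sub>v w = 0\<^sub>v n"
      using det_0_iff_vec_prod_zero[OF IC] \<open>det (1\<^sub>m n + ?C * T) = 0\<close> by blast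
    have "(1\<^sub>m n + ?C * T) *\<^sub>v w = 1\<^sub>m n *\<^sub>v w + (?C * T) *\<^sub>v w"
      by (rule add_mult_distrib_mat_vec[OF one_carrier_mat CT(1) w(1)])
    then have w0: "w + (?C * T) *\<^sub>v w = 0\<^sub>v n" using w(3) one_mult_mat_vec[OF w(1)] by simp
    have "(w + (?C * T) *\<^sub>v w, w - (?C * T) *\<^sub>v w) \<in> rel n (?C * T)" using w(1) unfolding rel_def by blast
    then have "(0\<^sub>v n, w - (?C * T) *\<^sub>v w) \<in> rel n (B * T) O rel n (A * T)" unfolding rel_sharp w0 .
    then obtain m where m1: "(0\<^sub>v n, m) \<in> rel n (B * T)" and m2: "(m, w - (?C * T) *\<^sub>v w) \<in> rel n (A * T)"
      by (rule relcompE) simp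
    from m1 obtain v1 where v1: "v1 \<in> carrier_vec n" "0\<^sub>v n = v1 + (B * T) *\<^sub>v v1" "m = v1 - (B * T) *\<^sub>v v1"
      unfolding rel_def by blast
    from m2 obtain v2 where v2: "v2 \<in> carrier_vec n" "m = v2 + (A * T) *\<^sub>v v2" "w - (?C * T) *\<^sub>v w = v2 - (A * T) *\<^sub>v v2"
      unfolding rel_def by blast
    have v10: "v1 = 0\<^sub>v n" by (rule inj_det[OF CT(3) dB v1(1) v1(2)[symmetric]])
    have "m = 0\<^sub>v n" unfolding v1(3) v10 mv_zero[OF CT(3)] by simp
    then have "v2 + (A * T) *\<^sub>v v2 = 0\<^sub>v n" using v2(2) by metis
    then have v20: "v2 = 0\<^sub>v n" by (rule inj_det[OF CT(2) dA v2(1)])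
    have w1: "w - (?C * T) *\<^sub>v w = 0\<^sub>v n" unfolding v2(3) v20 mv_zero[OF CT(2)] by simp
    have Xc: "(?C * T) *\<^sub>v w \<in> carrier_vec n" using CT(1) w(1) by (rule mult_mat_vec_carrier)
    have "w = 0\<^sub>v n"
    proof (rule eq_vecI)
      fix i assume "i < dim_vec (0\<^sub>v n :: complex vec)"
      then have i: "i < n" by simp
      have a1: "(w + (?C * T) *\<^sub>v w) $ i = 0" by (simp only: w0 index_zero_vec(1)[OF i])
      have a2: "(w - (?C * T) *\<^sub>v w) $ i = 0" by (simp only: w1 index_zero_vec(1)[OF i])
      have "w $ i + ((?C * T) *\<^sub>v w) $ i = 0 + 0" using a1 unfolding idx_add[OF w(1) Xc i] by simp
      moreover have "w $ i - ((?C * T) *\<^sub>v w) $ i = 0 - 0" using a2 unfolding idx_minus[OF w(1) Xc i] by simp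
      ultimately have "w $ i = 0" using c_lin by blast
      then show "w $ i = 0\<^sub>v n $ i" using i by simp
    next
      show "dim_vec w = dim_vec (0\<^sub>v n :: complex vec)" using w(1) by simp
    qed
    with w show False by simp
  qed
  then show ?thesis unfolding Sym_qnd_def using sharp_pos by auto
qed

lemma assoc_step: assumes A: "A \<in> Sym_pos (2*d)" and B: "B \<in> Sym_pos (2*d)" and C: "C \<in> Sym_pos (2*d)"
  shows "sharp d (sharp d A B) C = sharp d A (sharp d B C)"
proof -
  have AB: "sharp d A B \<in> Sym_pos (2*d)" using twopos.sharp_pos[OF twoposI[OF A B]] .
  have BC: "sharp d B C \<in> Sym_pos (2*d)" using twopos.sharp_pos[OF twoposI[OF B C]] .
  have "rel (2*d) (sharp d (sharp d A B) C * theta_mat d)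
      = rel (2*d) (C * theta_mat d) O (rel (2*d) (B * theta_mat d) O rel (2*d) (A * theta_mat d))"
    using twopos.rel_sharp[OF twoposI[OF AB C]] twopos.rel_sharp[OF twoposI[OF A B]] by simp
  also have "\<dots> = (rel (2*d) (C * theta_mat d) O rel (2*d) (B * theta_mat d)) O rel (2*d) (A * theta_mat d)"
    by (simp add: O_assoc)
  also have "\<dots> = rel (2*d) (sharp d A (sharp d B C) * theta_mat d)"
    using twopos.rel_sharp[OF twoposI[OF A BC]] twopos.rel_sharp[OF twoposI[OF B C]] by simp
  finally have r: "rel (2*d) (sharp d (sharp d A B) C * theta_mat d) = rel (2*d) (sharp d A (sharp d B C) * theta_mat d)" .
  have c1: "sharp d (sharp d A B) C \<in> carrier_mat (2*d) (2*d)" using twopos.sharp_carrier[OF twoposI[OF AB C]] .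
  have c2: "sharp d A (sharp d B C) \<in> carrier_mat (2*d) (2*d)" using twopos.sharp_carrier[OF twoposI[OF A BC]] .
  have "sharp d (sharp d A B) C * theta_mat d = sharp d A (sharp d B C) * theta_mat d"
    using rel_inj[OF _ _ r] c1 c2 by (meson mult_carrier_mat theta_carrier)
  then show ?thesis using cancel_T[OF c1 c2] by simp
qed

theorem mainTheorem4:
  fixes d :: nat
  assumes "d \<ge> 1"
  shows "(\<forall>A \<in> Sym_pos (2*d). \<forall>B \<in> Sym_pos (2*d).
            sharp_well_defined d A B \<and> sharp d A B \<in> Sym_pos (2*d))
       \<and> (\<forall>A \<in> Sym_pos (2*d). \<forall>B \<in> Sym_pos (2*d). \<forall>C \<in> Sym_pos (2*d).
            sharp d (sharp d A B) C = sharp d A (sharp d B C))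
       \<and> (\<forall>A \<in> Sym_qnd d. \<forall>B \<in> Sym_qnd d. sharp d A B \<in> Sym_qnd d)"
proof (intro conjI ballI)
  fix A B assume A: "A \<in> Sym_pos (2*d)" and B: "B \<in> Sym_pos (2*d)"
  show "sharp_well_defined d A B" unfolding sharp_well_defined_def by (rule twopos.M_inv[OF twoposI[OF A B]])
  show "sharp d A B \<in> Sym_pos (2*d)" by (rule twopos.sharp_pos[OF twoposI[OF A B]])
next
  fix A B C assume "A \<in> Sym_pos (2*d)" "B \<in> Sym_pos (2*d)" "C \<in> Sym_pos (2*d)"
  then show "sharp d (sharp d A B) C = sharp d A (sharp d B C)" by (rule assoc_step)
next
  fix A B assume "A \<in> Sym_qnd d" "B \<in> Sym_qnd d"
  then show "sharp d A B \<in> Sym_qnd d" by (rule qnd_step)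
qed

end
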